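(* Let $\{\mu_t\}$ be a free convolution semigroup, $s\le t$, and let $\mathcal K_{s,t}^\ast$ be the adjoint of $\mathcal K_{s,t}$ on $\mathcal M$, i.e. $\langle\mathcal K_{s,t}^\ast\nu,p\rangle=\langle\nu,\mathcal K_{s,t}p\rangle$. Then for every $\nu\in\mathcal M$, $G_{\mathcal K_{s,t}^\ast\nu}(z)=G_\nu(F_{s,t}(z))$. In particular, if $\{P_n(x,t)\}_{n\ge0}$ is a family of martingale polynomials for $\{\mu_t\}$ with $\deg P_n=n$, and $\{P_n^\ast(t)\}$ is the dual basis of $\mathcal M$ (i.e. $\langle P_n^\ast(t),P_k(\cdot,t)\rangle=\delta_{nk}$), then $G_{P_n^\ast(t)}(z)=G_{P_n^\ast(s)}(F_{s,t}(z))$.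
   Context: $\mathcal M$ is the space of linear functionals on $\mathbb C[x]$; for $\nu\in\mathcal M$, $G_\nu(z)=\sum_{n\ge0}\langle\nu,x^n\rangle z^{-(n+1)}$ (formal series in $z^{-1}$). $\mu$ is a freely infinitely divisible probability measure with all moments finite, $\{\mu_t\}$ its free convolution semigroup ($R_{\mu_t}=tR_\mu$, where $R_\nu=K_\nu-\frac1z$ and $K_\nu$ is the compositional inverse of $G_\nu$), $G_t=G_{\mu_t}$, $K_t=K_{\mu_t}$, $F_{s,t}=K_s\circ G_t$. $\mathcal K_{s,t}$ is the linear operator on $\mathbb C[x]$ determined coefficientwise by $\mathcal K_{s,t}(\mathrm{Res}_z)=\mathrm{Res}_{F_{s,t}(z)}$, $\mathrm{Res}_z(x)=\frac{1}{z-x}=\sum x^nz^{-(n+1)}$. A martingale polynomial is $p(x,t)$, polynomial in $x$, with $\mathcal K_{s,t}(p(\cdot,t))=p(\cdot,s)$ for $s<t$. *)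

theory Defs
  imports "HOL-Probability.Probability"
          "HOL-Computational_Algebra.Polynomial"
          "HOL-Computational_Algebra.Formal_Laurent_Series"
begin

(* All Cauchy-type transforms are formal series in z^{-1};
   we write w = z^{-1} and represent them as formal power / Laurent series in w.
   Elements of M (linear functionals on C[x]) are functions complex poly => complex
   satisfying lin_fun. *)

definition lin_fun :: "(complex poly \<Rightarrow> complex) \<Rightarrow> bool" where
  "lin_fun \<nu> \<longleftrightarrow> (\<forall>p q. \<nu> (p + q) = \<nu> p + \<nu> q) \<and> (\<forall>c p. \<nu> (smult c p) = c * \<nu> p)"

(* G_nu(z) = sum_n <nu,x^n> z^{-(n+1)}, as a power series in w = 1/z *)
definition Gf :: "(complex poly \<Rightarrow> complex) \<Rightarrow> complex fps" where
  "Gf \<nu> = Abs_fps (\<lambda>n. if n = 0 then 0 else \<nu> (monom 1 (n - 1)))"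

(* K_nu is the compositional inverse of G_nu: K_nu(G_nu(z)) = z.  In the variable
   w = 1/z this says 1/K_nu(u) = fps_inv (Gf nu) (u), so K_nu is the Laurent series
   (in u) inverse (fps_inv (Gf nu)); R_nu = K_nu - 1/u. *)
definition Kf :: "(complex poly \<Rightarrow> complex) \<Rightarrow> complex fls" where
  "Kf \<nu> = inverse (fps_to_fls (fps_inv (Gf \<nu>)))"

definition Rtr :: "(complex poly \<Rightarrow> complex) \<Rightarrow> complex fls" where
  "Rtr \<nu> = Kf \<nu> - fls_X_inv"

definition mom_fun :: "real measure \<Rightarrow> complex poly \<Rightarrow> complex" where
  "mom_fun N = (\<lambda>p. \<integral>x. poly p (complex_of_real x) \<partial>N)"

(* F_{s,t} = K_s o G_t.  We represent it through the power series (in w = 1/z)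
   of 1/F_{s,t}(z) = (1/K_s)(G_t(z)) = fps_inv (G_s) o G_t. *)
definition Finv :: "(complex poly \<Rightarrow> complex) \<Rightarrow> (complex poly \<Rightarrow> complex) \<Rightarrow> complex fps" where
  "Finv \<mu>s \<mu>t = fps_compose (fps_inv (Gf \<mu>s)) (Gf \<mu>t)"

(* G_nu(F(z)) = sum_n <nu,x^n> F(z)^{-(n+1)} = (Gf nu) o (1/F) *)
definition G_after :: "(complex poly \<Rightarrow> complex) \<Rightarrow> complex fps \<Rightarrow> complex fps" where
  "G_after \<nu> \<phi> = fps_compose (Gf \<nu>) \<phi>"

(* The operator K determined coefficientwise by K(1/(z-x)) = 1/(F(z)-x), where
   phi = 1/F(z) as a series in w:
     sum_k K(x^k) w^(k+1) = sum_n x^n phi^(n+1),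
   so K(x^k) = sum_n [w^(k+1)] phi^(n+1) x^n; since phi = O(w), only n <= k
   contribute. *)
definition Kop :: "complex fps \<Rightarrow> complex poly \<Rightarrow> complex poly" where
  "Kop \<phi> p = (\<Sum>k\<le>degree p. smult (coeff p k)
                  (\<Sum>n\<le>k. monom (fps_nth (\<phi> ^ Suc n) (Suc k)) n))"

definition Kadj :: "complex fps \<Rightarrow> (complex poly \<Rightarrow> complex) \<Rightarrow> (complex poly \<Rightarrow> complex)" where
  "Kadj \<phi> \<nu> = (\<lambda>p. \<nu> (Kop \<phi> p))"

end

theory Submission
  imports Defs
begin

definition Bk :: "complex fps \<Rightarrow> nat \<Rightarrow> complex poly" where
  "Bk \<phi> k = (\<Sum>n\<le>k. monom (fps_nth (\<phi> ^ Suc n) (Suc k)) n)"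

lemma Kop_N:
  assumes "degree p \<le> N"
  shows "Kop \<phi> p = (\<Sum>k\<le>N. smult (coeff p k) (Bk \<phi> k))"
  unfolding Kop_def Bk_def[symmetric]
  by (rule sum.mono_neutral_left) (use assms in \<open>auto simp: coeff_eq_0\<close>)

lemma smult_sum_r: "smult c (\<Sum>i\<in>A. f i) = (\<Sum>i\<in>A. smult c (f i))"
  by (induction A rule: infinite_finite_induct) (auto simp: smult_add_right)

lemma Kop_add: "Kop \<phi> (p + q) = Kop \<phi> p + Kop \<phi> q"
proof -
  define N where "N = max (degree p) (degree q)"
  have d: "degree (p + q) \<le> N" unfolding N_def by (rule degree_add_le) auto
  have dp: "degree p \<le> N" and dq: "degree q \<le> N" unfolding N_def by auto
  have "Kop \<phi> (p + q) = (\<Sum>k\<le>N. smult (coeff (p + q) k) (Bk \<phi> k))" by (rule Kop_N[OF d])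
  also have "\<dots> = (\<Sum>k\<le>N. smult (coeff p k) (Bk \<phi> k) + smult (coeff q k) (Bk \<phi> k))"
    by (simp only: coeff_add smult_add_left)
  also have "\<dots> = Kop \<phi> p + Kop \<phi> q"
    by (simp only: sum.distrib Kop_N[OF dp] Kop_N[OF dq])
  finally show ?thesis .
qed

lemma Kop_smult: "Kop \<phi> (smult c p) = smult c (Kop \<phi> p)"
proof -
  have d: "degree (smult c p) \<le> degree p" by simp
  have "Kop \<phi> (smult c p) = (\<Sum>k\<le>degree p. smult (coeff (smult c p) k) (Bk \<phi> k))"
    by (rule Kop_N[OF d])
  also have "\<dots> = (\<Sum>k\<le>degree p. smult c (smult (coeff p k) (Bk \<phi> k)))"
    by (simp only: coeff_smult smult_smult)
  also have "\<dots> = smult c (Kop \<phi> p)"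
    by (simp only: smult_sum_r[symmetric] Kop_N[OF order_refl])
  finally show ?thesis .
qed

lemma Kop_monom: "Kop \<phi> (monom 1 k) = Bk \<phi> k"
proof -
  have "Kop \<phi> (monom 1 k) = (\<Sum>j\<le>k. smult (coeff (monom 1 k) j) (Bk \<phi> j))"
    by (rule Kop_N) (simp add: degree_monom_eq)
  also have "\<dots> = (\<Sum>j\<le>k. if j = k then Bk \<phi> j else 0)"
    by (rule sum.cong) (auto simp: coeff_monom)
  also have "\<dots> = Bk \<phi> k" by simp
  finally show ?thesis .
qed

lemma lin_zero: "lin_fun \<nu> \<Longrightarrow> \<nu> 0 = 0"
  unfolding lin_fun_def by (metis add_cancel_right_right add_0)

lemma lin_sum: "lin_fun \<nu> \<Longrightarrow> \<nu> (\<Sum>i\<in>A. f i) = (\<Sum>i\<in>A. \<nu> (f i))"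
  by (induction A rule: infinite_finite_induct) (auto simp: lin_zero lin_fun_def)

lemma lin_monom: "lin_fun \<nu> \<Longrightarrow> \<nu> (monom c j) = c * \<nu> (monom 1 j)"
  unfolding lin_fun_def by (metis mult.right_neutral smult_monom)

lemma part1:
  assumes "lin_fun \<nu>"
  shows "Gf (Kadj \<phi> \<nu>) = G_after \<nu> \<phi>"
proof (rule fps_ext)
  fix n
  show "Gf (Kadj \<phi> \<nu>) $ n = G_after \<nu> \<phi> $ n"
  proof (cases n)
    case 0
    then show ?thesis by (simp add: Gf_def G_after_def fps_compose_nth)
  next
    case (Suc k)
    have "Gf (Kadj \<phi> \<nu>) $ n = \<nu> (Bk \<phi> k)"
      by (simp add: Suc Gf_def Kadj_def Kop_monom)
    also have "\<dots> = (\<Sum>j\<le>k. (\<phi> ^ Suc j) $ Suc k * \<nu> (monom 1 j))"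
      unfolding Bk_def lin_sum[OF assms] by (intro sum.cong refl lin_monom[OF assms])
    also have "\<dots> = G_after \<nu> \<phi> $ n"
      unfolding G_after_def fps_compose_nth Suc sum.atLeast0_atMost_Suc_shift
      by (simp add: Gf_def atLeast0AtMost mult.commute)
    finally show ?thesis .
  qed
qed

lemma lin_unique:
  assumes f: "lin_fun f" and g: "lin_fun g"
    and P: "\<And>k. degree (P k) = k" "\<And>k. P k \<noteq> 0"
    and eq: "\<And>k. f (P k) = g (P k)"
  shows "f p = g p"
proof (induction "degree p" arbitrary: p rule: less_induct)
  case less
  let ?d = "degree p"
  define c where "c = coeff p ?d / lead_coeff (P ?d)"
  define q where "q = p - smult c (P ?d)"
  have lc: "lead_coeff (P ?d) \<noteq> 0" using P(2)[of ?d] leading_coeff_0_iff by blast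
  have pq: "p = q + smult c (P ?d)" by (simp add: q_def)
  have fq: "f q = g q"
  proof (cases "q = 0")
    case True
    then show ?thesis using lin_zero[OF f] lin_zero[OF g] by simp
  next
    case False
    have "degree q \<le> ?d" unfolding q_def
      by (rule degree_diff_le) (auto simp: P)
    moreover have "coeff q ?d = 0" using lc P(1)[of ?d]
      by (simp add: q_def c_def)
    moreover have "degree q \<noteq> ?d"
    proof
      assume "degree q = ?d"
      then have "lead_coeff q = 0" using \<open>coeff q ?d = 0\<close> by simp
      then show False using False by simp
    qed
    ultimately have "degree q < ?d" by simp
    then show ?thesis using less by blast
  qed
  have fa: "\<And>a b. f (a + b) = f a + f b" and fs: "\<And>c a. f (smult c a) = c * f a"
    using f unfolding lin_fun_def by blast+
  have ga: "\<And>a b. g (a + b) = g a + g b" and gs: "\<And>c a. g (smult c a) = c * g a"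
    using g unfolding lin_fun_def by blast+
  have "f p = f (q + smult c (P ?d))" using arg_cong[of _ _ f, OF pq] .
  also have "\<dots> = f q + c * f (P ?d)" by (simp only: fa fs)
  also have "\<dots> = g q + c * g (P ?d)" using fq eq by simp
  also have "\<dots> = g (q + smult c (P ?d))" by (simp only: ga gs)
  also have "\<dots> = g p" using arg_cong[of _ _ g, OF pq] by simp
  finally show ?case .
qed

theorem lemma4p10:
  fixes M :: "real \<Rightarrow> real measure" and s t :: real
  assumes meas: "\<And>r. r \<ge> 0 \<Longrightarrow> prob_space (M r) \<and> sets (M r) = sets borel
                      \<and> (\<forall>n::nat. integrable (M r) (\<lambda>x. x ^ n))"
    and semigroup: "\<And>r. r \<ge> 0 \<Longrightarrow>
            Rtr (mom_fun (M r)) = fls_const (complex_of_real r) * Rtr (mom_fun (M 1))"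
    and st: "0 \<le> s" "s \<le> t"
  shows "(\<forall>\<nu>. lin_fun \<nu> \<longrightarrow>
            Gf (Kadj (Finv (mom_fun (M s)) (mom_fun (M t))) \<nu>)
              = G_after \<nu> (Finv (mom_fun (M s)) (mom_fun (M t))))
       \<and> (\<forall>(P :: nat \<Rightarrow> real \<Rightarrow> complex poly) (Pstar :: nat \<Rightarrow> real \<Rightarrow> complex poly \<Rightarrow> complex).
            (\<forall>n r. r \<ge> 0 \<longrightarrow> degree (P n r) = n)
          \<and> (\<forall>n r r'. 0 \<le> r \<and> r < r' \<longrightarrow>
                Kop (Finv (mom_fun (M r)) (mom_fun (M r'))) (P n r') = P n r)
          \<and> (\<forall>n r. r \<ge> 0 \<longrightarrow> lin_fun (Pstar n r)
                \<and> (\<forall>k. Pstar n r (P k r) = (if n = k then 1 else 0)))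
          \<longrightarrow> (\<forall>n. Gf (Pstar n t)
                   = G_after (Pstar n s) (Finv (mom_fun (M s)) (mom_fun (M t)))))"
proof (intro conjI allI impI)
  fix \<nu> assume "lin_fun \<nu>"
  then show "Gf (Kadj (Finv (mom_fun (M s)) (mom_fun (M t))) \<nu>)
              = G_after \<nu> (Finv (mom_fun (M s)) (mom_fun (M t)))" by (rule part1)
next
  fix P :: "nat \<Rightarrow> real \<Rightarrow> complex poly" and Pstar :: "nat \<Rightarrow> real \<Rightarrow> complex poly \<Rightarrow> complex" and n
  assume H: "(\<forall>n r. r \<ge> 0 \<longrightarrow> degree (P n r) = n)
          \<and> (\<forall>n r r'. 0 \<le> r \<and> r < r' \<longrightarrow>
                Kop (Finv (mom_fun (M r)) (mom_fun (M r'))) (P n r') = P n r)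
          \<and> (\<forall>n r. r \<ge> 0 \<longrightarrow> lin_fun (Pstar n r)
                \<and> (\<forall>k. Pstar n r (P k r) = (if n = k then 1 else 0)))"
  let ?\<phi> = "Finv (mom_fun (M s)) (mom_fun (M t))"
  have t0: "0 \<le> t" using st by linarith
  have H1: "\<And>k. degree (P k t) = k" using H t0 by blast
  have H2: "\<And>k. s < t \<Longrightarrow> Kop ?\<phi> (P k t) = P k s" using H st(1) by blast
  have H3: "\<And>m r. 0 \<le> r \<Longrightarrow> lin_fun (Pstar m r)" using H by blast
  have H4: "\<And>m k r. 0 \<le> r \<Longrightarrow> Pstar m r (P k r) = (if m = k then 1 else 0)"
    using H by blast
  show "Gf (Pstar n t) = G_after (Pstar n s) ?\<phi>"
  proof (cases "s = t")
    case True
    have ps: "prob_space (M s)" using meas st(1) by blast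
    have G0: "Gf (mom_fun (M s)) $ 0 = 0" by (simp add: Gf_def)
    have i1: "(\<integral>x. (1::complex) \<partial>(M s)) = 1"
      using prob_space.prob_space[OF ps] by simp
    have G1: "Gf (mom_fun (M s)) $ 1 = 1"
      unfolding Gf_def mom_fun_def using i1 by simp
    have "?\<phi> = fps_X" unfolding Finv_def True[symmetric]
      by (rule fps_inv) (use G0 G1 in simp_all)
    then show ?thesis using True by (simp add: G_after_def)
  next
    case False
    then have lt: "s < t" using st by linarith
    have ls: "lin_fun (Pstar n s)" using H3 st(1) .
    have lt': "lin_fun (Pstar n t)" using H3 t0 .
    have lk: "lin_fun (Kadj ?\<phi> (Pstar n s))"
      using ls unfolding lin_fun_def Kadj_def by (simp add: Kop_add Kop_smult)
    have nz: "P k t \<noteq> 0" for k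
    proof
      assume "P k t = 0"
      then have "Pstar k t (P k t) = 0" using lin_zero[OF H3[OF t0]] by simp
      then show False using H4[OF t0, of k k] by simp
    qed
    have "Kadj ?\<phi> (Pstar n s) = Pstar n t"
    proof
      fix p
      show "Kadj ?\<phi> (Pstar n s) p = Pstar n t p"
      proof (rule lin_unique[OF lk lt', where P = "\<lambda>k. P k t"])
        show "degree (P k t) = k" for k by (rule H1)
        show "P k t \<noteq> 0" for k by (rule nz)
        show "Kadj ?\<phi> (Pstar n s) (P k t) = Pstar n t (P k t)" for k
          unfolding Kadj_def H2[OF lt] H4[OF st(1)] H4[OF t0] by (rule refl)
      qed
    qed
    then show ?thesis using part1[OF ls, of ?\<phi>] by simp
  qed
qed
end
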